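(* Let $N\ge1$, let $-1=x_0<x_1<\cdots<x_N<1$ be Gauss–Radau points, let $\{l_j\}_{j=0}^N\subset\mathbb{P}_N$ be the Lagrange basis polynomials at these points, and let $B_0(x)=1$, $B_j(x)=\int_{-1}^xL_j(t)\,dt$ ($1\le j\le N$), where $L_j(x)=\frac{Q_N(x)}{(x-x_j)Q_N'(x_j)}$, $Q_N(x)=\prod_{i=1}^N(x-x_i)$; thus $B_j(-1)=0$, $B_j'(x_i)=\delta_{ij}$ for $1\le i,j\le N$. Set $b_{ij}=B_j(x_i)$, $d_{ij}=l_j'(x_i)$ and $\mathbf B=(b_{ij})_{0\le i,j\le N}$, $\mathbf B_{\rm in}=(b_{ij})_{1\le i,j\le N}$, $\mathbf D=(d_{ij})_{0\le i,j\le N}$, $\mathbf D_{\rm in}=(d_{ij})_{1\le i,j\le N}$. Let $\widetilde{\mathbf D}$ be obtained from $\mathbf D$ by replacing its first row by $(1,0,\dots,0)$. Then $$\mathbf D_{\rm in}\mathbf B_{\rm in}=\mathbf I_N,\qquad \widetilde{\mathbf D}\,\mathbf B=\mathbf I_{N+1}.$$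
   Context: Gauss–Radau points: Legendre–Gauss–Radau points (zeros of $P_N+P_{N+1}$, $P_k$ the Legendre polynomials) or Chebyshev–Gauss–Radau points $x_j=-\cos(2j\pi/(2N+1))$. $\mathbb{P}_N$ is the space of polynomials of degree at most $N$; $\mathbf I_M$ is the $M\times M$ identity matrix. *)

theory Defs
  imports "HOL-Analysis.Analysis" "HOL-Computational_Algebra.Polynomial" "Jordan_Normal_Form.Matrix"
begin

fun legendre :: "nat \<Rightarrow> real poly" where
  "legendre 0 = 1"
| "legendre (Suc 0) = [:0, 1:]"
| "legendre (Suc (Suc n)) =
     Polynomial.smult (1 / real (n + 2))
       (Polynomial.smult (real (2 * n + 3)) ([:0, 1:] * legendre (Suc n)) - Polynomial.smult (real (n + 1)) (legendre n))"

definition legendre_gauss_radau :: "nat \<Rightarrow> (nat \<Rightarrow> real) \<Rightarrow> bool" where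
  "legendre_gauss_radau N x \<longleftrightarrow>
     strict_mono_on {0..N} x \<and>
     x ` {0..N} = {t. poly (legendre N + legendre (Suc N)) t = 0}"

definition chebyshev_gauss_radau :: "nat \<Rightarrow> (nat \<Rightarrow> real) \<Rightarrow> bool" where
  "chebyshev_gauss_radau N x \<longleftrightarrow>
     (\<forall>j\<le>N. x j = - cos (2 * real j * pi / (2 * real N + 1)))"

definition gauss_radau :: "nat \<Rightarrow> (nat \<Rightarrow> real) \<Rightarrow> bool" where
  "gauss_radau N x \<longleftrightarrow> legendre_gauss_radau N x \<or> chebyshev_gauss_radau N x"

definition lagrange_basis :: "nat \<Rightarrow> (nat \<Rightarrow> real) \<Rightarrow> nat \<Rightarrow> real poly" where
  "lagrange_basis N x j =
     Polynomial.smult (1 / (\<Prod>k\<in>{0..N} - {j}. (x j - x k))) (\<Prod>k\<in>{0..N} - {j}. [:- x k, 1:])"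

definition QN :: "nat \<Rightarrow> (nat \<Rightarrow> real) \<Rightarrow> real poly" where
  "QN N x = (\<Prod>i\<in>{1..N}. [:- x i, 1:])"

definition LL :: "nat \<Rightarrow> (nat \<Rightarrow> real) \<Rightarrow> nat \<Rightarrow> real \<Rightarrow> real" where
  "LL N x j t = poly (QN N x) t / ((t - x j) * poly (pderiv (QN N x)) (x j))"

definition BB :: "nat \<Rightarrow> (nat \<Rightarrow> real) \<Rightarrow> nat \<Rightarrow> real \<Rightarrow> real" where
  "BB N x j t = (if j = 0 then 1 else integral {-1..t} (LL N x j))"

definition bcoef :: "nat \<Rightarrow> (nat \<Rightarrow> real) \<Rightarrow> nat \<Rightarrow> nat \<Rightarrow> real" where
  "bcoef N x i j = BB N x j (x i)"

definition dcoef :: "nat \<Rightarrow> (nat \<Rightarrow> real) \<Rightarrow> nat \<Rightarrow> nat \<Rightarrow> real" where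
  "dcoef N x i j = poly (pderiv (lagrange_basis N x j)) (x i)"

definition Bmat :: "nat \<Rightarrow> (nat \<Rightarrow> real) \<Rightarrow> real mat" where
  "Bmat N x = mat (N + 1) (N + 1) (\<lambda>(i, j). bcoef N x i j)"

definition Bin :: "nat \<Rightarrow> (nat \<Rightarrow> real) \<Rightarrow> real mat" where
  "Bin N x = mat N N (\<lambda>(i, j). bcoef N x (i + 1) (j + 1))"

definition Dmat :: "nat \<Rightarrow> (nat \<Rightarrow> real) \<Rightarrow> real mat" where
  "Dmat N x = mat (N + 1) (N + 1) (\<lambda>(i, j). dcoef N x i j)"

definition Din :: "nat \<Rightarrow> (nat \<Rightarrow> real) \<Rightarrow> real mat" where
  "Din N x = mat N N (\<lambda>(i, j). dcoef N x (i + 1) (j + 1))"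

definition Dtilde :: "nat \<Rightarrow> (nat \<Rightarrow> real) \<Rightarrow> real mat" where
  "Dtilde N x = mat (N + 1) (N + 1)
     (\<lambda>(i, j). if i = 0 then (if j = 0 then 1 else 0) else Dmat N x $$ (i, j))"

end

theory Submission
  imports Defs
begin

lemma pderiv_sum_gen: "pderiv (sum f A) = (\<Sum>a\<in>A. pderiv (f a))"
  by (induction A rule: infinite_finite_induct) (auto simp: pderiv_add)

lemma antideriv_exists:
  fixes p :: "real poly"
  shows "\<exists>P. pderiv P = p \<and> degree P \<le> degree p + 1"
proof -
  define P where "P = (\<Sum>i\<le>degree p. monom (coeff p i / real (Suc i)) (Suc i))"
  have "pderiv P = (\<Sum>i\<le>degree p. monom (coeff p i) i)"
    unfolding P_def pderiv_sum_gen by (simp add: pderiv_monom)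
  also have "\<dots> = p" by (rule poly_as_sum_of_monoms)
  finally have "pderiv P = p" .
  moreover have "degree P \<le> degree p + 1"
    unfolding P_def by (intro degree_sum_le) (auto intro: order.trans[OF degree_monom_le])
  ultimately show ?thesis by blast
qed

lemma degree_prod_lin:
  fixes c :: "nat \<Rightarrow> real"
  assumes "finite A"
  shows "degree (\<Prod>k\<in>A. [:- c k, 1:]) \<le> card A"
proof -
  have "degree (\<Prod>k\<in>A. [:- c k, 1:]) \<le> sum (degree \<circ> (\<lambda>k. [:- c k, 1:])) A"
    using assms by (rule degree_prod_sum_le)
  also have "\<dots> = card A" by simp
  finally show ?thesis .
qed

lemma lagrange_node:
  assumes inj: "inj_on x {0..N}" and "i \<le> N" "j \<le> N"
  shows "poly (lagrange_basis N x j) (x i) = (if i = j then 1 else 0)"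
proof (cases "i = j")
  case True
  have "(\<Prod>k\<in>{0..N} - {j}. (x j - x k)) \<noteq> 0"
    using inj assms by (auto simp: inj_on_def)
  then show ?thesis using True by (simp add: lagrange_basis_def poly_prod)
next
  case False
  have "(\<Prod>k\<in>{0..N} - {j}. poly [:- x k, 1:] (x i)) = 0"
    by (rule prod_zero) (use False assms in auto)
  then show ?thesis using False by (simp add: lagrange_basis_def poly_prod)
qed

lemma lagrange_degree: assumes "j \<le> N" shows "degree (lagrange_basis N x j) \<le> N"
proof -
  have "degree (\<Prod>k\<in>{0..N} - {j}. [:- x k, 1:]) \<le> card ({0..N} - {j})"
    by (rule degree_prod_lin) auto
  also have "\<dots> \<le> N" using assms by simp
  finally show ?thesis unfolding lagrange_basis_def
    using Polynomial.degree_smult_le order.trans by blast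
qed

lemma interp:
  fixes p :: "real poly"
  assumes inj: "inj_on x {0..N}" and deg: "degree p \<le> N"
  shows "p = (\<Sum>j\<in>{0..N}. Polynomial.smult (poly p (x j)) (lagrange_basis N x j))"
proof (rule poly_eqI_degree[where A = "x ` {0..N}"])
  fix t assume "t \<in> x ` {0..N}"
  then obtain i where i: "i \<le> N" "t = x i" by auto
  have "poly (\<Sum>j\<in>{0..N}. Polynomial.smult (poly p (x j)) (lagrange_basis N x j)) (x i)
      = (\<Sum>j\<in>{0..N}. poly p (x j) * (if i = j then 1 else 0))"
    by (simp add: poly_sum lagrange_node[OF inj i(1)])
  also have "\<dots> = poly p (x i)" using i by (simp add: if_distrib sum.delta cong: if_cong)
  finally show "poly p t = poly (\<Sum>j\<in>{0..N}. Polynomial.smult (poly p (x j)) (lagrange_basis N x j)) t"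
    using i by simp
next
  have c: "card (x ` {0..N}) = N + 1" using inj by (simp add: card_image)
  show "degree p < card (x ` {0..N})" using c deg by simp
  show "degree (\<Sum>j\<in>{0..N}. Polynomial.smult (poly p (x j)) (lagrange_basis N x j)) < card (x ` {0..N})"
    unfolding c
    by (rule le_imp_less_Suc[unfolded Suc_eq_plus1], rule degree_sum_le)
       (auto intro: order.trans[OF Polynomial.degree_smult_le] lagrange_degree)
qed


definition Lp :: "nat \<Rightarrow> (nat \<Rightarrow> real) \<Rightarrow> nat \<Rightarrow> real poly" where
  "Lp N x k = Polynomial.smult (1 / poly (pderiv (QN N x)) (x k)) (\<Prod>i\<in>{1..N} - {k}. [:- x i, 1:])"

lemma QN_split:
  assumes "k \<in> {1..N}"
  shows "QN N x = [:- x k, 1:] * (\<Prod>i\<in>{1..N} - {k}. [:- x i, 1:])"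
  unfolding QN_def using assms by (simp add: prod.remove)

lemma QN_deriv:
  assumes "k \<in> {1..N}"
  shows "poly (pderiv (QN N x)) (x k) = poly (\<Prod>i\<in>{1..N} - {k}. [:- x i, 1:]) (x k)"
proof -
  have d: "pderiv [:- x k, 1:] = 1" by (simp add: pderiv_pCons)
  show ?thesis by (subst QN_split[OF assms]) (simp only: pderiv_mult d, simp)
qed

lemma QN_deriv_nz:
  assumes inj: "inj_on x {0..N}" and "k \<in> {1..N}"
  shows "poly (pderiv (QN N x)) (x k) \<noteq> 0"
  unfolding QN_deriv[OF assms(2)] poly_prod
  using inj assms(2) by (auto simp: inj_on_def)

lemma Lp_node:
  assumes inj: "inj_on x {0..N}" and i: "i \<in> {1..N}" and k: "k \<in> {1..N}"
  shows "poly (Lp N x k) (x i) = (if i = k then 1 else 0)"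
proof (cases "i = k")
  case True
  then show ?thesis using QN_deriv_nz[OF inj k] by (simp add: Lp_def QN_deriv[OF k])
next
  case False
  have "(\<Prod>j\<in>{1..N} - {k}. poly [:- x j, 1:] (x i)) = 0"
    by (rule prod_zero) (use False i in auto)
  then show ?thesis using False by (simp add: Lp_def poly_prod)
qed

lemma LL_eq:
  assumes "k \<in> {1..N}" "t \<noteq> x k"
  shows "LL N x k t = poly (Lp N x k) t"
proof -
  have "poly (QN N x) t = (t - x k) * poly (\<Prod>i\<in>{1..N} - {k}. [:- x i, 1:]) t"
    by (subst QN_split[OF assms(1)]) (simp add: algebra_simps)
  then show ?thesis using assms(2) by (simp add: LL_def Lp_def)
qed

lemma Lp_degree:
  assumes "k \<in> {1..N}"
  shows "degree (Lp N x k) \<le> N - 1"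
proof -
  have "degree (\<Prod>i\<in>{1..N} - {k}. [:- x i, 1:]) \<le> card ({1..N} - {k})"
    by (rule degree_prod_lin) auto
  also have "\<dots> = N - 1" using assms by simp
  finally show ?thesis unfolding Lp_def
    using Polynomial.degree_smult_le order.trans by blast
qed

definition Pk :: "nat \<Rightarrow> (nat \<Rightarrow> real) \<Rightarrow> nat \<Rightarrow> real poly" where
  "Pk N x k = (SOME P. pderiv P = Lp N x k \<and> degree P \<le> degree (Lp N x k) + 1)"

lemma Pk_prop: "pderiv (Pk N x k) = Lp N x k \<and> degree (Pk N x k) \<le> degree (Lp N x k) + 1"
  unfolding Pk_def by (rule someI_ex) (rule antideriv_exists)

definition Bk :: "nat \<Rightarrow> (nat \<Rightarrow> real) \<Rightarrow> nat \<Rightarrow> real poly" where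
  "Bk N x k = (if k = 0 then 1 else Pk N x k - [:poly (Pk N x k) (-1):])"

lemma Bk_degree:
  assumes "k \<le> N" "N \<ge> 1"
  shows "degree (Bk N x k) \<le> N"
proof (cases "k = 0")
  case False
  have "degree (Pk N x k) \<le> N" using Pk_prop[of N x k] Lp_degree[of k N x] assms False by auto
  then show ?thesis using False unfolding Bk_def
    by (auto intro: order.trans[OF degree_diff_le_max])
qed (simp add: Bk_def)

lemma Bk_deriv_node:
  assumes inj: "inj_on x {0..N}" and i: "i \<in> {1..N}" and k: "k \<le> N"
  shows "poly (pderiv (Bk N x k)) (x i) = (if i = k then 1 else 0)"
proof (cases "k = 0")
  case True then show ?thesis using i by (simp add: Bk_def)
next
  case False
  then have k': "k \<in> {1..N}" using k by auto
  have "pderiv (Bk N x k) = Lp N x k"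
    using False Pk_prop[of N x k] by (simp add: Bk_def pderiv_diff)
  then show ?thesis using Lp_node[OF inj i k'] by simp
qed

lemma bcoef_eq:
  assumes k: "k \<le> N" and t: "-1 \<le> x j"
  shows "bcoef N x j k = poly (Bk N x k) (x j)"
proof (cases "k = 0")
  case True then show ?thesis by (simp add: bcoef_def BB_def Bk_def)
next
  case False
  then have k': "k \<in> {1..N}" using k by auto
  have "integral {-1..x j} (LL N x k) = integral {-1..x j} (\<lambda>t. poly (Lp N x k) t)"
    by (rule integral_spike[where S = "{x k}"]) (auto simp: LL_eq[OF k'])
  also have "\<dots> = poly (Pk N x k) (x j) - poly (Pk N x k) (-1)"
  proof (rule integral_unique, rule fundamental_theorem_of_calculus[OF t])
    fix s assume "s \<in> {-1..x j}"
    have "((\<lambda>t. poly (Pk N x k) t) has_real_derivative poly (Lp N x k) s) (at s within {-1..x j})"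
      using poly_DERIV[of "Pk N x k" s] Pk_prop[of N x k]
      by (auto intro: DERIV_subset)
    then show "((\<lambda>t. poly (Pk N x k) t) has_vector_derivative poly (Lp N x k) s) (at s within {-1..x j})"
      by (simp add: has_real_derivative_iff_has_vector_derivative)
  qed
  finally show ?thesis using False by (simp add: bcoef_def BB_def Bk_def)
qed


lemma key_sum:
  assumes inj: "inj_on x {0..N}" and i: "i \<in> {1..N}" and k: "k \<le> N" and N: "N \<ge> 1"
    and ge: "\<And>j. j \<le> N \<Longrightarrow> -1 \<le> x j"
  shows "(\<Sum>j\<in>{0..N}. dcoef N x i j * bcoef N x j k) = (if i = k then 1 else 0)"
proof -
  have e: "Bk N x k = (\<Sum>j\<in>{0..N}. Polynomial.smult (poly (Bk N x k) (x j)) (lagrange_basis N x j))"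
    by (rule interp[OF inj Bk_degree[OF k N]])
  have "poly (pderiv (Bk N x k)) (x i)
      = (\<Sum>j\<in>{0..N}. poly (Bk N x k) (x j) * poly (pderiv (lagrange_basis N x j)) (x i))"
    by (subst e) (simp add: pderiv_sum_gen pderiv_smult poly_sum)
  also have "\<dots> = (\<Sum>j\<in>{0..N}. dcoef N x i j * bcoef N x j k)"
    by (rule sum.cong) (auto simp: dcoef_def bcoef_eq[OF k ge])
  finally show ?thesis using Bk_deriv_node[OF inj i k] by simp
qed

lemma b0:
  assumes "x 0 = -1"
  shows "bcoef N x 0 k = (if k = 0 then 1 else 0)"
  using assms by (simp add: bcoef_def BB_def)


theorem theorem4p1:
  fixes N :: nat and x :: "nat \<Rightarrow> real"
  assumes "N \<ge> 1"
    and "x 0 = -1"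
    and "\<And>i j. i < j \<Longrightarrow> j \<le> N \<Longrightarrow> x i < x j"
    and "x N < 1"
    and "gauss_radau N x"
  shows "Din N x * Bin N x = 1\<^sub>m N \<and> Dtilde N x * Bmat N x = 1\<^sub>m (N + 1)"
proof -
  have inj: "inj_on x {0..N}"
  proof (rule inj_onI)
    fix a b assume "a \<in> {0..N}" "b \<in> {0..N}" "x a = x b"
    then show "a = b" using assms(3)[of a b] assms(3)[of b a]
      by (cases a b rule: linorder_cases) auto
  qed
  have ge: "-1 \<le> x j" if "j \<le> N" for j
    using assms(2) assms(3)[of 0 j] that by (cases "j = 0") auto
  have ks: "(\<Sum>j\<in>{0..N}. dcoef N x i j * bcoef N x j k) = (if i = k then 1 else 0)"
    if "i \<in> {1..N}" "k \<le> N" for i k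
    by (rule key_sum[OF inj that assms(1) ge])
  have b0': "bcoef N x 0 k = (if k = 0 then 1 else 0)" for k using b0[of x N k] assms(2) by simp
  have s1: "Din N x * Bin N x = 1\<^sub>m N"
  proof (rule eq_matI)
    fix i k assume ik: "i < dim_row (1\<^sub>m N)" "k < dim_col (1\<^sub>m N)"
    then have ik': "i < N" "k < N" by auto
    have "(Din N x * Bin N x) $$ (i, k) = (\<Sum>j\<in>{0..<N}. dcoef N x (i+1) (j+1) * bcoef N x (j+1) (k+1))"
      using ik' by (simp add: Din_def Bin_def scalar_prod_def)
    also have "\<dots> = (\<Sum>j\<in>{1..N}. dcoef N x (i+1) j * bcoef N x j (k+1))"
      by (rule sum.reindex_bij_witness[where i = "\<lambda>j. j - 1" and j = "\<lambda>j. j + 1"]) auto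
    also have "\<dots> = (\<Sum>j\<in>{0..N}. dcoef N x (i+1) j * bcoef N x j (k+1))"
      by (subst sum.atLeast_Suc_atMost[of 0 N]) (auto simp: b0')
    also have "\<dots> = (if i = k then 1 else 0)" using ks[of "i+1" "k+1"] ik' by simp
    finally show "(Din N x * Bin N x) $$ (i, k) = 1\<^sub>m N $$ (i, k)" using ik' by simp
  qed (auto simp: Din_def Bin_def)
  have s2: "Dtilde N x * Bmat N x = 1\<^sub>m (N+1)"
  proof (rule eq_matI)
    fix i k assume ik: "i < dim_row (1\<^sub>m (N+1))" "k < dim_col (1\<^sub>m (N+1))"
    then have ik': "i \<le> N" "k \<le> N" by auto
    have "(Dtilde N x * Bmat N x) $$ (i, k) = (\<Sum>j\<in>{0..<N+1}. Dtilde N x $$ (i, j) * bcoef N x j k)"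
      using ik' by (simp add: Dtilde_def Bmat_def scalar_prod_def)
    also have "\<dots> = (if i = k then 1 else 0)"
    proof (cases "i = 0")
      case True
      have "(\<Sum>j\<in>{0..<N+1}. Dtilde N x $$ (i, j) * bcoef N x j k)
          = (\<Sum>j\<in>{0..<N+1}. (if j = 0 then bcoef N x j k else 0))"
        by (rule sum.cong) (auto simp: Dtilde_def True)
      then show ?thesis using True b0'[of k] by (simp only: sum.delta finite_atLeastLessThan) simp
    next
      case False
      have "(\<Sum>j\<in>{0..<N+1}. Dtilde N x $$ (i, j) * bcoef N x j k)
          = (\<Sum>j\<in>{0..N}. dcoef N x i j * bcoef N x j k)"
        using False ik' by (intro sum.cong) (auto simp: Dtilde_def Dmat_def)
      then show ?thesis using ks[of i k] False ik' by simp
    qed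
    finally show "(Dtilde N x * Bmat N x) $$ (i, k) = 1\<^sub>m (N+1) $$ (i, k)" using ik' by simp
  qed (auto simp: Dtilde_def Bmat_def)
  show ?thesis using s1 s2 by simp
qed

end
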